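(* For every $\xi \in \Xi^{+}$, $$\phi_D(\xi)=\min_{\mu\in\Xi^{+}}\sum_{x\in\mathcal{X}} H_D(\mu,x)\,\xi(x),\qquad H_D(\mu,x)=\frac{\det^{1/p}[M(\mu)]}{p}\,f^\top(x)M^{-1}(\mu)f(x),$$ and the minimum is attained at $\mu=\xi$.
   Context: $\mathcal{X}$ is a finite set (the design space) and $f:\mathcal{X}\to\mathbb{R}^p$ is a given function. $\Xi$ denotes the set of all probability measures $\xi$ on $\mathcal{X}$ (i.e. $\xi(x)\ge 0$, $\sum_{x\in\mathcal{X}}\xi(x)=1$). The information matrix of $\xi\in\Xi$ is $M(\xi)=\sum_{x\in\mathcal{X}} f(x)f^\top(x)\xi(x)$, and $\Xi^{+}=\{\mu\in\Xi: M(\mu)\text{ is nonsingular}\}$. The $D$-optimality criterion is $\phi_D(\xi)=\det^{1/p}[M(\xi)]$. *)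

theory Defs
  imports "HOL-Analysis.Analysis"
begin

definition design_measures :: "('x::finite \<Rightarrow> real) set" where
  "design_measures = {\<xi>. (\<forall>x. \<xi> x \<ge> 0) \<and> (\<Sum>x\<in>UNIV. \<xi> x) = 1}"

definition info_matrix :: "('x::finite \<Rightarrow> real^'p) \<Rightarrow> ('x \<Rightarrow> real) \<Rightarrow> real^'p^'p" where
  "info_matrix f \<xi> = (\<Sum>x\<in>UNIV. \<xi> x *\<^sub>R (\<chi> i j. f x $ i * f x $ j))"

definition design_measures_plus :: "('x::finite \<Rightarrow> real^'p) \<Rightarrow> ('x \<Rightarrow> real) set" where
  "design_measures_plus f = {\<mu> \<in> design_measures. invertible (info_matrix f \<mu>)}"

definition phiD :: "('x::finite \<Rightarrow> real^'p) \<Rightarrow> ('x \<Rightarrow> real) \<Rightarrow> real" where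
  "phiD f \<xi> = det (info_matrix f \<xi>) powr (1 / real CARD('p))"

definition HD :: "('x::finite \<Rightarrow> real^'p) \<Rightarrow> ('x \<Rightarrow> real) \<Rightarrow> 'x \<Rightarrow> real" where
  "HD f \<mu> x = det (info_matrix f \<mu>) powr (1 / real CARD('p)) / real CARD('p)
      * (f x \<bullet> (matrix_inv (info_matrix f \<mu>) *v f x))"

end

theory Submission
  imports Defs
begin


lemma inner_mat_adj:
  fixes A :: "real^'n^'n"
  shows "x \<bullet> (A *v y) = (transpose A *v x) \<bullet> y"
  by (simp add: inner_vec_def matrix_vector_mult_def transpose_def sum_distrib_left sum_distrib_right
      mult_ac) (rule sum.swap)

lemma inner_sym_mat:
  fixes A :: "real^'n^'n"
  assumes "transpose A = A"
  shows "x \<bullet> (A *v y) = y \<bullet> (A *v x)"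
  by (metis inner_mat_adj assms inner_commute)

lemma dim_real_vec: "dim (UNIV :: (real^'n) set) = CARD('n)"
  by simp


lemma small_quad:
  fixes a b :: real
  assumes "\<And>t. 2 * t * a \<le> t^2 * b"
  shows "a = 0"
proof (rule ccontr)
  assume a: "a \<noteq> 0"
  define t where "t = a / (\<bar>b\<bar> + 1)"
  have pos: "\<bar>b\<bar> + 1 > 0" by simp
  have tc: "t * (\<bar>b\<bar> + 1) = a" using pos by (simp add: t_def)
  have "2 * t * a * (\<bar>b\<bar> + 1)^2 \<le> t^2 * b * (\<bar>b\<bar> + 1)^2"
    by (rule mult_right_mono[OF assms]) simp
  also have "t^2 * b * (\<bar>b\<bar> + 1)^2 = (t * (\<bar>b\<bar> + 1))^2 * b" by (simp add: power_mult_distrib)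
  also have "2 * t * a * (\<bar>b\<bar> + 1)^2 = 2 * (t * (\<bar>b\<bar> + 1)) * a * (\<bar>b\<bar> + 1)" by (simp add: power2_eq_square)
  finally have "2 * a * a * (\<bar>b\<bar> + 1) \<le> a * a * b" unfolding tc by (simp add: power2_eq_square)
  hence "a * a * (2 * \<bar>b\<bar> + 2 - b) \<le> 0" by (simp add: algebra_simps)
  moreover have "a * a > 0" using a by (auto simp: zero_less_mult_iff linorder_neq_iff)
  moreover have "2 * \<bar>b\<bar> + 2 - b > 0" by linarith
  ultimately show False using mult_pos_pos[of "a*a" "2 * \<bar>b\<bar> + 2 - b"] by linarith
qed

lemma eigvec_exists:
  fixes A :: "real^'n^'n"
  assumes sym: "transpose A = A" and S: "subspace S" and inv: "\<forall>x\<in>S. A *v x \<in> S"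
    and ne: "S \<noteq> {0}"
  shows "\<exists>v\<in>S. norm v = 1 \<and> (\<exists>c. A *v v = c *\<^sub>R v)"
proof -
  define K where "K = S \<inter> sphere 0 1"
  define g where "g = (\<lambda>x::real^'n. x \<bullet> (A *v x))"
  have cK: "compact K" unfolding K_def
    by (intro closed_Int_compact closed_subspace S compact_sphere)
  have neK: "K \<noteq> {}"
  proof -
    obtain x where x: "x \<in> S" "x \<noteq> 0" using ne S subspace_0 by blast
    have "(1 / norm x) *\<^sub>R x \<in> S" using x S by (simp add: subspace_scale)
    moreover have "norm ((1 / norm x) *\<^sub>R x) = 1" using x by simp
    ultimately show ?thesis unfolding K_def by auto
  qed
  have cg: "continuous_on K g"
  proof -
    have "bounded_linear (\<lambda>x::real^'n. A *v x)"
      using matrix_vector_mul_linear linear_conv_bounded_linear by blast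
    hence "continuous_on K (\<lambda>x::real^'n. A *v x)" by (rule linear_continuous_on)
    thus ?thesis unfolding g_def by (intro continuous_on_inner continuous_on_id)
  qed
  obtain v where vK: "v \<in> K" and vmax0: "\<forall>y\<in>K. g y \<le> g v"
    using continuous_attains_sup[OF cK neK cg] by blast
  have vmax: "\<And>y. y \<in> K \<Longrightarrow> g y \<le> g v" using vmax0 by blast
  have vS: "v \<in> S" and nv: "norm v = 1" using vK unfolding K_def by auto
  have vv: "v \<bullet> v = 1" using nv by (simp add: norm_eq_1)
  define lam where "lam = g v"
  have hom: "g u \<le> lam * (norm u)^2" if "u \<in> S" for u
  proof (cases "u = 0")
    case True then show ?thesis by (simp add: g_def)
  next
    case False
    have "(1 / norm u) *\<^sub>R u \<in> K" using that False S unfolding K_def by (simp add: subspace_scale)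
    hence "g ((1 / norm u) *\<^sub>R u) \<le> lam" using vmax lam_def by blast
    moreover have "g ((1 / norm u) *\<^sub>R u) = g u / (norm u)^2"
      by (simp add: g_def matrix_vector_mult_scaleR power2_eq_square)
    ultimately show ?thesis using False by (simp add: field_simps)
  qed
  have orth: "w \<bullet> (A *v v) = 0" if wS: "w \<in> S" and wv: "w \<bullet> v = 0" for w
  proof -
    have sy: "v \<bullet> (A *v w) = w \<bullet> (A *v v)" by (rule inner_sym_mat[OF sym])
    have "2 * t * (w \<bullet> (A *v v)) \<le> t^2 * (lam * (w \<bullet> w) - g w)" for t
    proof -
      have uS: "v + t *\<^sub>R w \<in> S" using vS wS S by (simp add: subspace_add subspace_scale)
      have "g (v + t *\<^sub>R w) \<le> lam * (norm (v + t *\<^sub>R w))^2" by (rule hom[OF uS])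
      moreover have "(norm (v + t *\<^sub>R w))^2 = 1 + t^2 * (w \<bullet> w)"
        unfolding power2_norm_eq_inner using vv wv
        by (simp add: inner_add_left inner_add_right inner_commute power2_eq_square)
      moreover have "g (v + t *\<^sub>R w) = lam + 2 * t * (w \<bullet> (A *v v)) + t^2 * g w"
        using sy unfolding g_def lam_def
        by (simp add: matrix_vector_right_distrib matrix_vector_mult_scaleR inner_add_left
            inner_add_right power2_eq_square algebra_simps)
      ultimately show ?thesis by (simp add: algebra_simps)
    qed
    thus ?thesis by (rule small_quad)
  qed
  define w where "w = A *v v - lam *\<^sub>R v"
  have wS: "w \<in> S" unfolding w_def using vS inv S by (simp add: subspace_diff subspace_scale)
  have wv: "w \<bullet> v = 0" unfolding w_def lam_def g_def using vv
    by (simp add: inner_diff_left inner_diff_right inner_commute)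
  have "w \<bullet> w = w \<bullet> (A *v v) - lam * (w \<bullet> v)" unfolding w_def
    by (simp add: inner_diff_right)
  also have "\<dots> = 0" using orth[OF wS wv] wv by simp
  finally have "w = 0" by simp
  hence "A *v v = lam *\<^sub>R v" unfolding w_def by simp
  thus ?thesis using vS nv by blast
qed


lemma spectral_subspace:
  fixes A :: "real^'n^'n"
  assumes sym: "transpose A = A"
  shows "subspace S \<Longrightarrow> dim S = n \<Longrightarrow> (\<forall>x\<in>S. A *v x \<in> S) \<Longrightarrow>
    \<exists>B. B \<subseteq> S \<and> finite B \<and> card B = n \<and> pairwise orthogonal B \<and>
        (\<forall>v\<in>B. norm v = 1 \<and> (\<exists>c. A *v v = c *\<^sub>R v))"
proof (induction n arbitrary: S)
  case 0
  then show ?case by (intro exI[of _ "{}"]) auto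
next
  case (Suc n)
  have ne: "S \<noteq> {0}" using Suc.prems(2) by auto
  obtain v where vS: "v \<in> S" and nv: "norm v = 1" and ev: "\<exists>c. A *v v = c *\<^sub>R v"
    using eigvec_exists[OF sym Suc.prems(1) Suc.prems(3) ne] by blast
  obtain lam where lam: "A *v v = lam *\<^sub>R v" using ev by blast
  have v0: "v \<noteq> 0" using nv by auto
  define S' where "S' = {y \<in> S. \<forall>x\<in>span {v}. orthogonal x y}"
  have sub': "subspace S'"
  proof -
    have "S' = S \<inter> {y. \<forall>x\<in>span {v}. orthogonal x y}" unfolding S'_def by auto
    thus ?thesis using Suc.prems(1) subspace_orthogonal_to_vectors subspace_inter by metis
  qed
  have spS: "span {v} \<subseteq> S" using vS Suc.prems(1) by (simp add: span_minimal)
  have "dim S' + dim (span {v}) = dim S" unfolding S'_def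
    by (rule dim_subspace_orthogonal_to_vectors[OF subspace_span Suc.prems(1) spS])
  hence dim': "dim S' = n" using Suc.prems(2) v0 by simp
  have inv': "\<forall>x\<in>S'. A *v x \<in> S'"
  proof
    fix y assume y: "y \<in> S'"
    have "A *v y \<in> S" using y Suc.prems(3) unfolding S'_def by auto
    moreover have "orthogonal x (A *v y)" if x: "x \<in> span {v}" for x
    proof -
      obtain k where xk: "x = k *\<^sub>R v" using x by (auto simp: span_singleton)
      have "x \<bullet> (A *v y) = (A *v x) \<bullet> y" using inner_mat_adj[of x A y] sym by simp
      also have "A *v x = (k * lam) *\<^sub>R v" using xk lam by (simp add: matrix_vector_mult_scaleR)
      also have "((k * lam) *\<^sub>R v) \<bullet> y = 0"
      proof -
        have "v \<in> span {v}" by (rule span_base) simp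
        hence "v \<bullet> y = 0" using y unfolding S'_def orthogonal_def by blast
        thus ?thesis by simp
      qed
      finally show ?thesis unfolding orthogonal_def .
    qed
    ultimately show "A *v y \<in> S'" unfolding S'_def by auto
  qed
  obtain B' where B': "B' \<subseteq> S'" "finite B'" "card B' = n" "pairwise orthogonal B'"
      "\<forall>v\<in>B'. norm v = 1 \<and> (\<exists>c. A *v v = c *\<^sub>R v)"
    using Suc.IH[OF sub' dim' inv'] by blast
  have orthB: "orthogonal v y" if "y \<in> B'" for y
    using that B'(1) unfolding S'_def by (auto intro: span_base)
  have vnB: "v \<notin> B'"
  proof
    assume "v \<in> B'"
    hence "v \<bullet> v = 0" using orthB unfolding orthogonal_def by blast
    thus False using v0 by simp
  qed
  show ?case
  proof (intro exI[of _ "insert v B'"] conjI)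
    show "insert v B' \<subseteq> S" using vS B'(1) unfolding S'_def by auto
    show "finite (insert v B')" using B'(2) by simp
    show "card (insert v B') = Suc n" using B'(2,3) vnB by simp
    show "pairwise orthogonal (insert v B')"
      using B'(4) orthB by (auto simp: pairwise_insert orthogonal_commute)
    show "\<forall>v\<in>insert v B'. norm v = 1 \<and> (\<exists>c. A *v v = c *\<^sub>R v)" using B'(5) nv ev by auto
  qed
qed


definition diagm :: "('n::finite \<Rightarrow> real) \<Rightarrow> real^'n^'n" where
  "diagm d = (\<chi> i j. if i = j then d i else 0)"

lemma entry_tAB:
  fixes P A R :: "real^'n^'n"
  shows "(transpose P ** A ** R) $ i $ j = column i P \<bullet> (A *v column j R)"
  by (simp add: matrix_matrix_mult_def transpose_def column_def inner_vec_def
      matrix_vector_mult_def sum_distrib_left sum_distrib_right mult_ac) (rule sum.swap)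

lemma spectral_matrix:
  fixes A :: "real^'n^'n"
  assumes sym: "transpose A = A"
  shows "\<exists>Q d. orthogonal_matrix Q \<and> transpose Q ** A ** Q = diagm d"
proof -
  obtain B where B: "finite B" "card B = CARD('n)" "pairwise orthogonal B"
      "\<forall>v\<in>B. norm v = 1 \<and> (\<exists>c. A *v v = c *\<^sub>R v)"
    using spectral_subspace[OF sym, of UNIV "CARD('n)"] by auto
  obtain h where h: "bij_betw h (UNIV :: 'n set) B"
    using finite_same_card_bij[of "UNIV :: 'n set" B] B(1,2) by auto
  have hB: "h i \<in> B" for i using h by (auto simp: bij_betw_def)
  have hinj: "h i = h j \<Longrightarrow> i = j" for i j using h by (auto simp: bij_betw_def inj_def)
  define Q :: "real^'n^'n" where "Q = (\<chi> i j. h j $ i)"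
  have colQ: "column j Q = h j" for j by (simp add: Q_def column_def vec_eq_iff)
  define d where "d j = (SOME c. A *v h j = c *\<^sub>R h j)" for j
  have d: "A *v h j = d j *\<^sub>R h j" for j
    unfolding d_def by (rule someI_ex) (use B(4) hB in blast)
  have nh: "h j \<bullet> h j = 1" for j using B(4) hB by (simp add: norm_eq_1)
  have oh: "i \<noteq> j \<Longrightarrow> h i \<bullet> h j = 0" for i j
    using B(3) hB hinj unfolding pairwise_def orthogonal_def by metis
  have "orthogonal_matrix Q"
    unfolding orthogonal_matrix_orthonormal_columns colQ
    using nh oh by (auto simp: norm_eq_1 orthogonal_def)
  moreover have "transpose Q ** A ** Q = diagm d"
    by (simp add: vec_eq_iff entry_tAB colQ d diagm_def nh oh)
  ultimately show ?thesis by blast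
qed


lemma info_mv:
  "info_matrix f \<xi> *v z = (\<Sum>x\<in>UNIV. (\<xi> x * (f x \<bullet> z)) *\<^sub>R f x)"
  by (simp add: info_matrix_def vec_eq_iff matrix_vector_mult_def inner_vec_def
      sum_distrib_left sum_distrib_right mult_ac sum_component) (intro allI; rule sum.swap)

lemma info_bil:
  "y \<bullet> (info_matrix f \<xi> *v z) = (\<Sum>x\<in>UNIV. \<xi> x * (f x \<bullet> y) * (f x \<bullet> z))"
  unfolding info_mv by (simp add: inner_sum_right inner_commute mult_ac)

lemma info_sym: "transpose (info_matrix f \<xi>) = info_matrix f \<xi>"
  by (simp add: info_matrix_def transpose_def vec_eq_iff sum_component mult_ac)

lemma info_psd:
  assumes "\<xi> \<in> design_measures"
  shows "y \<bullet> (info_matrix f \<xi> *v y) \<ge> 0"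
  unfolding info_bil using assms unfolding design_measures_def
  by (auto intro!: sum_nonneg simp: mult.assoc)

lemma diagm_mult: "diagm a ** diagm b = diagm (\<lambda>i. a i * b i)"
proof -
  have e: "(if i = k then a i else 0) * (if k = j then b k else 0)
     = (if k = i then (if i = j then a i * b i else 0) else 0)" for i j k :: 'a by auto
  show ?thesis by (simp add: diagm_def matrix_matrix_mult_def vec_eq_iff e)
qed

lemma diagm_transpose: "transpose (diagm a) = diagm a"
  by (simp add: diagm_def transpose_def vec_eq_iff)

lemma diagm_one: "diagm (\<lambda>i. 1) = mat 1"
  by (simp add: diagm_def mat_def vec_eq_iff)

lemma det_diagm: "det (diagm d) = (\<Prod>i\<in>UNIV. d i)"
  by (subst det_diagonal) (auto simp: diagm_def)

lemma matrix_inv_eq: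
  fixes N G :: "real^'n^'n"
  assumes "N ** G = mat 1"
  shows "matrix_inv N = G"
proof -
  have GN: "G ** N = mat 1" using assms matrix_left_right_inverse by blast
  have ex: "\<exists>X. N ** X = mat 1 \<and> X ** N = mat 1" using assms GN by blast
  define X where "X = matrix_inv N"
  have X: "N ** X = mat 1 \<and> X ** N = mat 1" unfolding X_def matrix_inv_def by (rule someI_ex[OF ex])
  have "X = X ** (N ** G)" using assms by simp
  also have "\<dots> = (X ** N) ** G" by (simp add: matrix_mul_assoc)
  also have "\<dots> = G" using X by simp
  finally show ?thesis unfolding X_def .
qed

lemma det_congr:
  fixes W N :: "real^'n^'n"
  shows "det (transpose W ** N ** W) = (det W)^2 * det N"
  by (simp add: det_mul power2_eq_square)

lemma decompN:
  fixes f :: "'x::finite \<Rightarrow> real^'p"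
  assumes "\<mu> \<in> design_measures_plus f"
  shows "\<exists>W::real^'p^'p. transpose W ** info_matrix f \<mu> ** W = mat 1
            \<and> matrix_inv (info_matrix f \<mu>) = W ** transpose W"
    and "det (info_matrix f \<mu>) > 0"
proof -
  let ?N = "info_matrix f \<mu>"
  have dm: "\<mu> \<in> design_measures" and inv: "invertible ?N"
    using assms unfolding design_measures_plus_def by auto
  obtain Q d where Q: "orthogonal_matrix Q" and QNQ: "transpose Q ** ?N ** Q = diagm d"
    using spectral_matrix[OF info_sym] by blast
  have dnn: "d i \<ge> 0" for i
  proof -
    have "d i = (transpose Q ** ?N ** Q) $ i $ i" using QNQ by (simp add: diagm_def)
    also have "\<dots> \<ge> 0" unfolding entry_tAB by (rule info_psd[OF dm])
    finally show ?thesis .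
  qed
  have dQ: "(det Q)^2 = 1" using det_orthogonal_matrix[OF Q] by auto
  have detN: "det ?N = (\<Prod>i\<in>UNIV. d i)"
    using det_congr[of Q ?N] QNQ dQ by (simp add: det_diagm)
  have "det ?N \<noteq> 0" using inv invertible_det_nz by blast
  hence dpos: "d i > 0" for i using dnn[of i] detN by (metis less_eq_real_def UNIV_I finite prod_zero_iff)
  show "det ?N > 0" unfolding detN using dpos by (simp add: prod_pos)
  define e where "e i = 1 / sqrt (d i)" for i
  define W where "W = Q ** diagm e"
  have WNW: "transpose W ** ?N ** W = mat 1"
  proof -
    have "transpose W ** ?N ** W = diagm e ** (transpose Q ** ?N ** Q) ** diagm e"
      unfolding W_def by (simp add: matrix_transpose_mul diagm_transpose matrix_mul_assoc)
    also have "\<dots> = diagm (\<lambda>i. e i * d i * e i)" unfolding QNQ diagm_mult by simp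
    also have "(\<lambda>i. e i * d i * e i) = (\<lambda>i. 1)"
    proof (rule ext)
      fix i
      have s: "sqrt (d i) * sqrt (d i) = d i" using dpos[of i] by simp
      have "sqrt (d i) > 0" using dpos[of i] by simp
      thus "e i * d i * e i = 1" unfolding e_def using s by (simp add: field_simps)
    qed
    finally show ?thesis using diagm_one by simp
  qed
  have "transpose W ** (?N ** W) = mat 1" using WNW by (simp add: matrix_mul_assoc)
  hence "(?N ** W) ** transpose W = mat 1" using matrix_left_right_inverse by blast
  hence "?N ** (W ** transpose W) = mat 1" by (simp add: matrix_mul_assoc)
  hence "matrix_inv ?N = W ** transpose W" by (rule matrix_inv_eq)
  with WNW show "\<exists>W::real^'p^'p. transpose W ** ?N ** W = mat 1 \<and> matrix_inv ?N = W ** transpose W" by blast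
qed


lemma col_tv:
  fixes W :: "real^'n^'n"
  shows "(transpose W *v y) $ i = column i W \<bullet> y"
  by (simp add: matrix_vector_mult_def transpose_def column_def inner_vec_def mult_ac)

lemma quad_WWt:
  fixes W :: "real^'n^'n"
  shows "y \<bullet> ((W ** transpose W) *v y) = (\<Sum>i\<in>UNIV. (column i W \<bullet> y)^2)"
proof -
  have "y \<bullet> ((W ** transpose W) *v y) = y \<bullet> (W *v (transpose W *v y))"
    by (simp only: matrix_vector_mul_assoc)
  also have "\<dots> = (transpose W *v y) \<bullet> (transpose W *v y)" by (rule inner_mat_adj)
  also have "\<dots> = (\<Sum>i\<in>UNIV. (column i W \<bullet> y)^2)"
    by (subst inner_vec_def) (simp only: col_tv power2_eq_square inner_real_def)
  finally show ?thesis .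
qed

lemma trace_formula:
  fixes W :: "real^'p^'p" and f :: "'x::finite \<Rightarrow> real^'p"
  shows "(\<Sum>x\<in>UNIV. \<xi> x * (f x \<bullet> ((W ** transpose W) *v f x)))
     = (\<Sum>i\<in>UNIV. column i W \<bullet> (info_matrix f \<xi> *v column i W))"
  unfolding quad_WWt info_bil
  by (simp add: sum_distrib_left power2_eq_square inner_commute mult_ac) (rule sum.swap)

lemma HD_sum:
  "(\<Sum>x\<in>UNIV. HD f \<mu> x * \<xi> x) = det (info_matrix f \<mu>) powr (1 / real CARD('p)) / real CARD('p)
     * (\<Sum>x\<in>UNIV. \<xi> x * (f x \<bullet> (matrix_inv (info_matrix f \<mu>) *v f x)))"
  for f :: "'x::finite \<Rightarrow> real^'p"
  unfolding HD_def by (simp add: sum_distrib_left mult_ac)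

lemma main_eq:
  fixes f :: "'x::finite \<Rightarrow> real^'p"
  assumes "\<mu> \<in> design_measures_plus f"
  shows "(\<Sum>x\<in>UNIV. HD f \<mu> x * \<mu> x) = det (info_matrix f \<mu>) powr (1 / real CARD('p))"
proof -
  obtain W :: "real^'p^'p" where W: "transpose W ** info_matrix f \<mu> ** W = mat 1"
    and Wi: "matrix_inv (info_matrix f \<mu>) = W ** transpose W"
    using decompN(1)[OF assms] by blast
  have "(\<Sum>x\<in>UNIV. \<mu> x * (f x \<bullet> (matrix_inv (info_matrix f \<mu>) *v f x)))
      = (\<Sum>i\<in>UNIV. (transpose W ** info_matrix f \<mu> ** W) $ i $ i)"
    unfolding Wi trace_formula entry_tAB ..
  also have "\<dots> = real CARD('p)" unfolding W by (simp add: mat_def)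
  finally show ?thesis unfolding HD_sum by simp
qed

lemma main_ineq:
  fixes f :: "'x::finite \<Rightarrow> real^'p"
  assumes mu: "\<mu> \<in> design_measures_plus f" and xi: "\<xi> \<in> design_measures"
  shows "det (info_matrix f \<xi>) powr (1 / real CARD('p)) \<le> (\<Sum>x\<in>UNIV. HD f \<mu> x * \<xi> x)"
proof -
  let ?N = "info_matrix f \<mu>" and ?M = "info_matrix f \<xi>" and ?p = "real CARD('p)"
  obtain W :: "real^'p^'p" where W: "transpose W ** ?N ** W = mat 1"
    and Wi: "matrix_inv ?N = W ** transpose W"
    using decompN(1)[OF mu] by blast
  have dN: "det ?N > 0" by (rule decompN(2)[OF mu])
  define C where "C = transpose W ** ?M ** W"
  have symC: "transpose C = C" unfolding C_def
    by (simp add: matrix_transpose_mul info_sym matrix_mul_assoc)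
  obtain P lam where P: "orthogonal_matrix P" and PCP: "transpose P ** C ** P = diagm lam"
    using spectral_matrix[OF symC] by blast
  define V where "V = W ** P"
  have PtP: "transpose P ** P = mat 1" and PPt: "P ** transpose P = mat 1"
    using P unfolding orthogonal_matrix_def by auto
  have VNV: "transpose V ** ?N ** V = mat 1"
  proof -
    have "transpose V ** ?N ** V = transpose P ** (transpose W ** ?N ** W) ** P"
      unfolding V_def by (simp add: matrix_transpose_mul matrix_mul_assoc)
    thus ?thesis using W PtP by simp
  qed
  have VVt: "V ** transpose V = W ** transpose W"
  proof -
    have "V ** transpose V = W ** (P ** transpose P) ** transpose W"
      unfolding V_def by (simp add: matrix_transpose_mul matrix_mul_assoc)
    thus ?thesis using PPt by simp
  qed
  have VMV: "transpose V ** ?M ** V = diagm lam"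
  proof -
    have "transpose V ** ?M ** V = transpose P ** C ** P"
      unfolding V_def C_def by (simp add: matrix_transpose_mul matrix_mul_assoc)
    thus ?thesis using PCP by simp
  qed
  have lam_eq: "lam i = column i V \<bullet> (?M *v column i V)" for i
  proof -
    have "lam i = (transpose V ** ?M ** V) $ i $ i" unfolding VMV by (simp add: diagm_def)
    thus ?thesis unfolding entry_tAB .
  qed
  have lam_nn: "lam i \<ge> 0" for i unfolding lam_eq by (rule info_psd[OF xi])
  have d1: "(det V)^2 * det ?N = 1" using det_congr[of V ?N] VNV by simp
  have d2: "(det V)^2 * det ?M = (\<Prod>i\<in>UNIV. lam i)" using det_congr[of V ?M] VMV by (simp add: det_diagm)
  have detM: "det ?M = (\<Prod>i\<in>UNIV. lam i) * det ?N"
  proof -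
    have "det ?M = ((det V)^2 * det ?N) * det ?M" using d1 by simp
    also have "\<dots> = ((det V)^2 * det ?M) * det ?N" by (simp add: mult_ac)
    finally show ?thesis using d2 by simp
  qed
  have tr: "(\<Sum>x\<in>UNIV. \<xi> x * (f x \<bullet> (matrix_inv ?N *v f x))) = (\<Sum>i\<in>UNIV. lam i)"
    unfolding Wi VVt[symmetric] trace_formula lam_eq ..
  have pp: "?p > 0" by simp
  have prod_nn: "(\<Prod>i\<in>UNIV. lam i) \<ge> 0" using lam_nn by (simp add: prod_nonneg)
  have am: "(\<Prod>i\<in>UNIV. lam i) powr (1 / ?p) \<le> (\<Sum>i\<in>UNIV. lam i) / ?p"
    using arith_geom_mean[of "UNIV :: 'p set" lam] lam_nn by (simp add: sum_divide_distrib)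
  have "det ?M powr (1 / ?p) = (\<Prod>i\<in>UNIV. lam i) powr (1 / ?p) * det ?N powr (1 / ?p)"
    unfolding detM using prod_nn dN by (simp add: powr_mult)
  also have "\<dots> \<le> (\<Sum>i\<in>UNIV. lam i) / ?p * det ?N powr (1 / ?p)"
    by (rule mult_right_mono[OF am]) simp
  also have "\<dots> = (\<Sum>x\<in>UNIV. HD f \<mu> x * \<xi> x)"
    unfolding HD_sum tr by simp
  finally show ?thesis .
qed

theorem theorem1:
  fixes f :: "'x::finite \<Rightarrow> real^'p" and \<xi> :: "'x \<Rightarrow> real"
  assumes "\<xi> \<in> design_measures_plus f"
  shows "phiD f \<xi> = (INF \<mu>\<in>design_measures_plus f. \<Sum>x\<in>UNIV. HD f \<mu> x * \<xi> x)
       \<and> (\<forall>\<mu>\<in>design_measures_plus f. (\<Sum>x\<in>UNIV. HD f \<xi> x * \<xi> x) \<le> (\<Sum>x\<in>UNIV. HD f \<mu> x * \<xi> x))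
       \<and> phiD f \<xi> = (\<Sum>x\<in>UNIV. HD f \<xi> x * \<xi> x)"
proof -
  have xi: "\<xi> \<in> design_measures" using assms unfolding design_measures_plus_def by auto
  have eq: "phiD f \<xi> = (\<Sum>x\<in>UNIV. HD f \<xi> x * \<xi> x)"
    unfolding phiD_def using main_eq[OF assms] by simp
  have le: "\<forall>\<mu>\<in>design_measures_plus f. (\<Sum>x\<in>UNIV. HD f \<xi> x * \<xi> x) \<le> (\<Sum>x\<in>UNIV. HD f \<mu> x * \<xi> x)"
    using main_ineq[OF _ xi] eq unfolding phiD_def by metis
  have "(INF \<mu>\<in>design_measures_plus f. \<Sum>x\<in>UNIV. HD f \<mu> x * \<xi> x) = (\<Sum>x\<in>UNIV. HD f \<xi> x * \<xi> x)"
    by (rule cInf_eq_minimum) (use assms le in auto)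
  with eq le show ?thesis by simp
qed


end
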